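(* There are absolute constants $c_4,c_5,C_6 > 0$ such that for all sufficiently small $a > 0$ the following hold (with $h$ and $G_a$ as in the context). First, $h(e^{2\pi i t}) \in G_a$ for all real $t$ with $|t| \le c_4a$. Second, $|h(e^{2\pi i t})| \le 1-c_5\frac{|t|}{\log^2(a^{-1})}$ for all $t \in [-\frac{1}{2},\frac{1}{2}]\setminus [-C_6a^{1/2},C_6a^{1/2}]$.
   Context: For $a>0$ let $r = a^{-1/2}$ (floor functions omitted, so $r$ is a positive integer). Let $r_* \in \{1,\dots,r\}$ be such that $\sum_{j=1}^{r_*} \frac{1}{\log^2(j+3)}-\sum_{j=r_*+1}^r \frac{1}{\log^2(j+3)} \in [20,21]$. Let $\epsilon_j = +1$ for $1 \le j \le r_*$ and $\epsilon_j = -1$ for $r_*+1 \le j \le r$. Let $\lambda_a>0$ be such that $\sum_{j=1}^r \frac{\lambda_a}{j^2\log^2(j+3)} = 1$ and set $d_j = \frac{\lambda_a}{j^2\log^2(j+3)}$. Define $\widetilde{h}(z) = \widetilde{\lambda}_a\sum_{j=1}^r \epsilon_j d_j z^j$, where $\widetilde{\lambda}_a>0$ is chosen so that $\widetilde{h}(1) = 1$, and $h(z) = (1-a^{10})\widetilde{h}(z)$. Let $\alpha = e^{ia}$, $\beta = e^{-ia}$, and $G_a = \{z \in \mathbb{C} : \arg(\frac{\alpha-z}{z-\beta}) \in (\frac{a}{2},a)\}$ (principal argument). $\log$ is the natural logarithm. *)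

theory Defs
  imports "HOL-Analysis.Analysis"
begin

text \<open>r = a^(-1/2), floor taken (the paper omits floors).\<close>
definition rr :: "real \<Rightarrow> nat" where
  "rr a = nat \<lfloor>a powr (-1/2)\<rfloor>"

definition rstar_ok :: "real \<Rightarrow> nat \<Rightarrow> bool" where
  "rstar_ok a rs \<longleftrightarrow> 1 \<le> rs \<and> rs \<le> rr a \<and>
     (let S = (\<Sum>j=1..rs. 1 / (ln (real j + 3))\<^sup>2) - (\<Sum>j=rs+1..rr a. 1 / (ln (real j + 3))\<^sup>2)
      in 20 \<le> S \<and> S \<le> 21)"

definition eps :: "nat \<Rightarrow> nat \<Rightarrow> real" where
  "eps rs j = (if j \<le> rs then 1 else -1)"

definition lam :: "real \<Rightarrow> real" where
  "lam a = 1 / (\<Sum>j=1..rr a. 1 / ((real j)\<^sup>2 * (ln (real j + 3))\<^sup>2))"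

definition dd :: "real \<Rightarrow> nat \<Rightarrow> real" where
  "dd a j = lam a / ((real j)\<^sup>2 * (ln (real j + 3))\<^sup>2)"

text \<open>tilde-lambda chosen so that tilde-h(1) = 1.\<close>
definition lamt :: "real \<Rightarrow> nat \<Rightarrow> real" where
  "lamt a rs = 1 / (\<Sum>j=1..rr a. eps rs j * dd a j)"

definition htilde :: "real \<Rightarrow> nat \<Rightarrow> complex \<Rightarrow> complex" where
  "htilde a rs z = of_real (lamt a rs) * (\<Sum>j=1..rr a. of_real (eps rs j * dd a j) * z ^ j)"

definition hh :: "real \<Rightarrow> nat \<Rightarrow> complex \<Rightarrow> complex" where
  "hh a rs z = of_real (1 - a ^ 10) * htilde a rs z"

definition GG :: "real \<Rightarrow> complex set" where
  "GG a = {z. Arg ((cis a - z) / (z - cis (-a))) \<in> {a/2<..<a}}"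

end

theory Submission
  imports Defs "HOL-Real_Asymp.Real_Asymp"
begin


lemma ln_ub_aux:
  assumes "0 < y" "(y::real) \<le> (1 + x / real n) ^ n" "x \<ge> - real n" "n > 0"
  shows "ln y \<le> x"
proof -
  have "(1 + x / real n) ^ n \<le> exp x" by (rule exp_ge_one_plus_x_over_n_power_n) (use assms in auto)
  hence "y \<le> exp x" using assms by linarith
  thus ?thesis using assms by (metis ln_exp ln_le_cancel_iff exp_gt_zero)
qed

lemma ln_lb_aux:
  assumes "0 < y" "1 \<le> y * (1 - x / real n) ^ n" "x \<le> real n" "n > 0"
  shows "x \<le> ln y"
proof -
  have "(1 - x / real n) ^ n \<le> exp (-x)" by (rule exp_ge_one_minus_x_over_n_power_n) (use assms in auto)
  hence "1 \<le> y * exp (-x)" using assms by (meson dual_order.trans mult_left_mono less_imp_le)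
  hence "exp x \<le> y" by (simp add: exp_minus field_simps)
  thus ?thesis using assms by (simp add: ln_ge_iff)
qed

lemma ln4_ub: "ln (4::real) \<le> 3/2"
  by (rule ln_ub_aux[where n=16]) (simp_all add: power_divide)
lemma ln4_lb: "(135/100::real) \<le> ln 4"
  by (rule ln_lb_aux[where n=32]) (simp_all add: power_divide)
lemma ln5_ub: "ln (5::real) \<le> 17/10"
  by (rule ln_ub_aux[where n=32]) (simp_all add: power_divide)
lemma ln5_lb: "(155/100::real) \<le> ln 5"
  by (rule ln_lb_aux[where n=32]) (simp_all add: power_divide)
lemma ln6_ub: "ln (6::real) \<le> 2"
  by (rule ln_ub_aux[where n=16]) (simp_all add: power_divide)
lemma ln3_lb: "1 \<le> ln (3::real)"
  using exp_le by (simp add: ln_ge_iff)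



lemma inv_sq_tail_aux: "m \<ge> 1 \<Longrightarrow> n \<ge> m \<Longrightarrow> (\<Sum>j=m+1..n. 1 / (real j)^2) \<le> 1 / real m - 1 / real n"
proof (induction n)
  case 0 then show ?case by simp
next
  case (Suc n)
  show ?case
  proof (cases "Suc n = m")
    case True then show ?thesis by simp
  next
    case False
    hence nm: "n \<ge> m" using Suc.prems by simp
    have IH: "(\<Sum>j=m+1..n. 1 / (real j)^2) \<le> 1 / real m - 1 / real n" using Suc.IH Suc.prems nm by simp
    have "(\<Sum>j=m+1..Suc n. 1 / (real j)^2) = (\<Sum>j=m+1..n. 1 / (real j)^2) + 1 / (real (Suc n))^2"
      using nm by (simp add: sum.cl_ivl_Suc)
    moreover have "1 / (real (Suc n))^2 \<le> 1 / real n - 1 / real (Suc n)"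
    proof -
      have n1: "real n \<ge> 1" using nm Suc.prems by simp
      have sn: "real (Suc n) = real n + 1" by simp
      have "1 / real n - 1 / (real n + 1) = 1 / (real n * (real n + 1))" using n1 by (simp add: field_simps)
      moreover have "real n * (real n + 1) \<le> (real n + 1)^2" by (simp add: power2_eq_square algebra_simps)
      hence "1 / (real n + 1)^2 \<le> 1 / (real n * (real n + 1))" using n1 by (intro divide_left_mono) auto
      ultimately show ?thesis unfolding sn by linarith
    qed
    ultimately show ?thesis using IH by linarith
  qed
qed

lemma inv_sq_tail: "m \<ge> 1 \<Longrightarrow> (\<Sum>j=m+1..n. 1 / (real j)^2) \<le> 1 / real m"
proof (cases "n \<ge> m")
  case True
  assume "m \<ge> 1"
  have "0 \<le> 1 / real n" by simp
  thus ?thesis using inv_sq_tail_aux[OF \<open>m \<ge> 1\<close> True] by linarith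
next
  case False then show ?thesis by simp
qed

lemma inv_sq_sum: "(\<Sum>j=1..r. 1 / (real j)^2) \<le> 2"
proof (cases "r \<ge> 1")
  case True
  have "{1..r} = insert 1 {1+1..r}" using True by auto
  hence "(\<Sum>j=1..r. 1 / (real j)^2) = 1 + (\<Sum>j=1+1..r. 1 / (real j)^2)" by simp
  thus ?thesis using inv_sq_tail[of 1 r] by simp
next
  case False then show ?thesis by simp
qed

lemma ln_diff_ge: "(x::real) \<ge> 1 \<Longrightarrow> 1 / (x + 1) \<le> ln (x + 1) - ln x"
proof -
  assume x: "x \<ge> 1"
  have "ln (x / (x+1)) \<le> x / (x+1) - 1" using x by (intro ln_le_minus_one) auto
  moreover have "x / (x+1) - 1 = - (1 / (x+1))" using x by (simp add: field_simps)
  moreover have "ln (x / (x+1)) = ln x - ln (x+1)" using x by (simp add: ln_div)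
  ultimately show ?thesis by linarith
qed

lemma tele_term:
  assumes j: "j \<ge> 3"
  shows "1 / (real j * (ln (real j + 3))^2) \<le> 2 * (1 / ln (real j + 2) - 1 / ln (real j + 3))"
proof -
  define A B where "A = ln (real j + 2)" and "B = ln (real j + 3)"
  have "ln 3 \<le> A" unfolding A_def using j by (subst ln_le_cancel_iff) auto
  hence A1: "A \<ge> 1" using ln3_lb by linarith
  have AB: "A \<le> B" unfolding A_def B_def by simp
  have d: "1 / (real j + 3) \<le> B - A" unfolding A_def B_def using ln_diff_ge[of "real j + 2"] j
    by (simp add: add.assoc)
  have "1 / ln (real j + 2) - 1 / ln (real j + 3) = (B - A) / (A * B)" unfolding A_def[symmetric] B_def[symmetric]
    using A1 AB by (simp add: diff_frac_eq)
  also have "\<dots> \<ge> (1 / (real j + 3)) / (B * B)"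
  proof -
    have "(1 / (real j + 3)) / (B * B) \<le> (B - A) / (B * B)" using d A1 AB by (intro divide_right_mono) auto
    also have "\<dots> \<le> (B - A) / (A * B)"
    proof (rule divide_left_mono)
      show "A * B \<le> B * B" using A1 AB by (intro mult_right_mono) auto
      show "0 \<le> B - A" using AB by simp
      show "0 < B * B * (A * B)" using A1 AB by simp
    qed
    finally show ?thesis .
  qed
  finally have f1: "(1 / (real j + 3)) / (B * B) \<le> 1 / ln (real j + 2) - 1 / ln (real j + 3)" .
  have f2: "1 / (real j * B^2) \<le> 2 * ((1 / (real j + 3)) / (B * B))"
  proof -
    have "real j + 3 \<le> 2 * real j" using j by simp
    hence "1 / (real j) \<le> 2 / (real j + 3)" using j by (simp add: divide_simps)
    hence "1 / real j * (1 / B^2) \<le> 2 / (real j + 3) * (1 / B^2)" by (intro mult_right_mono) auto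
    thus ?thesis by (simp add: power2_eq_square)
  qed
  have "1 / (real j * B^2) \<le> 2 * (1 / ln (real j + 2) - 1 / ln (real j + 3))"
    using order_trans[OF f2 mult_left_mono[OF f1]] by simp
  thus ?thesis unfolding B_def .
qed

lemma tele_sum: "r \<ge> 2 \<Longrightarrow> (\<Sum>j=3..r. 1 / (real j * (ln (real j + 3))^2)) \<le> 2 / ln 5 - 2 / ln (real r + 3)"
proof (induction r)
  case 0 then show ?case by simp
next
  case (Suc r)
  show ?case
  proof (cases "r \<ge> 2")
    case False
    hence "Suc r = 2" using Suc.prems by simp
    thus ?thesis by simp
  next
    case True
    have "(\<Sum>j=3..Suc r. 1 / (real j * (ln (real j + 3))^2)) = (\<Sum>j=3..r. 1 / (real j * (ln (real j + 3))^2)) + 1 / (real (Suc r) * (ln (real (Suc r) + 3))^2)"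
      using True by (simp add: sum.cl_ivl_Suc)
    moreover have tt: "1 / (real (Suc r) * (ln (real (Suc r) + 3))^2) \<le> 2 * (1 / ln (real (Suc r) + 2) - 1 / ln (real (Suc r) + 3))"
      using True by (intro tele_term) simp
    moreover have eq2: "real (Suc r) + 2 = real r + 3" by simp
    moreover have IH: "(\<Sum>j=3..r. 1 / (real j * (ln (real j + 3))^2)) \<le> 2 / ln 5 - 2 / ln (real r + 3)"
      using Suc.IH True by blast
    moreover have eq3: "2 * (1 / ln (real r + 3) - 1 / ln (real (Suc r) + 3)) = 2 / ln (real r + 3) - 2 / ln (real (Suc r) + 3)"
      by simp
    ultimately show ?thesis by (simp only: eq2; linarith)
  qed
qed



lemma pair_bound:
  fixes p q :: real and u :: complex
  assumes "0 \<le> q" "q \<le> p" "cmod u = 1" "Re u \<le> 0"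
  shows "cmod (of_real p + of_real q * u) \<le> p + q/2"
proof -
  have u2: "(Re u)^2 + (Im u)^2 = 1" using assms(3) by (metis cmod_power2 power_one)
  have "(cmod (of_real p + of_real q * u))^2 = (p + q * Re u)^2 + (q * Im u)^2"
    by (simp add: cmod_power2)
  also have "\<dots> = p^2 + 2*p*q*Re u + q^2 * ((Re u)^2 + (Im u)^2)" by (simp add: power2_eq_square algebra_simps)
  also have "\<dots> \<le> (p + q/2)^2"
  proof -
    have "2*p*q*Re u \<le> 0" using assms by (simp add: mult_nonneg_nonpos)
    moreover have "q*q \<le> p*q" using assms by (simp add: mult_right_mono)
    moreover have "0 \<le> q*q" by simp
    moreover have "p^2 + 2*p*q*Re u + q^2 * ((Re u)^2 + (Im u)^2) = p^2 + 2*p*q*Re u + q*q"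
      using u2 by (simp add: power2_eq_square)
    moreover have "(p+q/2)^2 = p^2 + p*q + q*q/4" by (simp add: power2_eq_square algebra_simps)
    ultimately show ?thesis by linarith
  qed
  finally have "(cmod (of_real p + of_real q * u))^2 \<le> (p + q/2)^2" .
  thus ?thesis by (rule power2_le_imp_le) (use assms in simp)
qed

lemma pairing:
  fixes p :: "nat \<Rightarrow> real" and u :: complex
  assumes pos: "\<And>j. 0 \<le> p j" and dec: "\<And>i j. 1 \<le> i \<Longrightarrow> i \<le> j \<Longrightarrow> p j \<le> p i"
    and k: "1 \<le> k" "3*k \<le> m + 1" and u: "cmod u = 1" "Re (u^k) \<le> 0"
  shows "cmod (\<Sum>j=1..m. of_real (p j) * u^j) \<le> (\<Sum>j=1..m. p j) - (\<Sum>j=k..<2*k. p (j+k))/2"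
proof -
  define R where "R = {1..m} - {k..<3*k}"
  have split: "{1..m} = {k..<2*k} \<union> {2*k..<3*k} \<union> R" using k unfolding R_def by auto
  have fin: "finite R" unfolding R_def by auto
  have sumsplit: "(\<Sum>j=1..m. f j) = (\<Sum>j=k..<2*k. f j + f (j+k)) + (\<Sum>j\<in>R. f j)" for f :: "nat \<Rightarrow> 'a::comm_monoid_add"
  proof -
    have "(\<Sum>j=1..m. f j) = (\<Sum>j\<in>{k..<2*k} \<union> {2*k..<3*k}. f j) + (\<Sum>j\<in>R. f j)"
      unfolding split by (rule sum.union_disjoint) (auto simp: R_def)
    also have "(\<Sum>j\<in>{k..<2*k} \<union> {2*k..<3*k}. f j) = (\<Sum>j=k..<2*k. f j) + (\<Sum>j=2*k..<3*k. f j)"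
      by (rule sum.union_disjoint) auto
    also have "(\<Sum>j=2*k..<3*k. f j) = (\<Sum>j=k..<2*k. f (j+k))"
    proof -
      have "{2*k..<3*k} = {k+k..<2*k+k}" by auto
      thus ?thesis using sum.shift_bounds_nat_ivl[of f k k "2*k"] by simp
    qed
    finally show ?thesis by (simp add: sum.distrib)
  qed
  have "cmod (\<Sum>j=1..m. of_real (p j) * u^j) \<le> (\<Sum>j=k..<2*k. cmod (of_real (p j) * u^j + of_real (p (j+k)) * u^(j+k))) + (\<Sum>j\<in>R. cmod (of_real (p j) * u^j))"
    unfolding sumsplit[of "\<lambda>j. of_real (p j) * u^j"]
    by (intro order_trans[OF norm_triangle_ineq] add_mono norm_sum)
  also have "\<dots> \<le> (\<Sum>j=k..<2*k. p j + p (j+k)/2) + (\<Sum>j\<in>R. p j)"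
  proof (intro add_mono sum_mono)
    fix j assume "j \<in> {k..<2*k}"
    have "of_real (p j) * u^j + of_real (p (j+k)) * u^(j+k) = u^j * (of_real (p j) + of_real (p (j+k)) * u^k)"
      by (simp add: power_add algebra_simps)
    moreover have "cmod (u^j) = 1" using u by (simp add: norm_power)
    moreover have "cmod (of_real (p j) + of_real (p (j+k)) * u^k) \<le> p j + p (j+k)/2"
    proof (rule pair_bound)
      have "1 \<le> j" using \<open>j \<in> {k..<2*k}\<close> k by auto
      thus "p (j+k) \<le> p j" by (intro dec) auto
    qed (use pos u in \<open>auto simp: norm_power\<close>)
    ultimately show "cmod (of_real (p j) * u^j + of_real (p (j+k)) * u^(j+k)) \<le> p j + p (j+k)/2"
      by (simp add: norm_mult)
  next
    fix j assume "j \<in> R"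
    show "cmod (of_real (p j) * u^j) \<le> p j" using u pos by (simp add: norm_mult norm_power)
  qed
  also have "\<dots> = (\<Sum>j=1..m. p j) - (\<Sum>j=k..<2*k. p (j+k))/2"
    unfolding sumsplit[of p] by (simp add: sum.distrib sum_divide_distrib[symmetric])
  finally show ?thesis .
qed



lemma arg_window:
  fixes \<theta> a :: real
  assumes "-pi < \<theta>" "\<theta> \<le> pi" "0 < a" "a < pi" "sin (\<theta> - a/2) > 0" "sin (\<theta> - a) < 0"
  shows "a/2 < \<theta> \<and> \<theta> < a"
proof (rule ccontr)
  assume "\<not> (a/2 < \<theta> \<and> \<theta> < a)"
  then consider "\<theta> \<ge> a" | "\<theta> \<le> a/2 \<and> \<theta> - a/2 \<ge> -pi" | "\<theta> - a/2 < -pi" by linarith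
  then show False
  proof cases
    case 1 then have "0 \<le> sin (\<theta> - a)" using assms by (intro sin_ge_zero) auto
    then show False using assms by linarith
  next
    case 2 then have "0 \<le> sin (a/2 - \<theta>)" using assms by (intro sin_ge_zero) auto
    moreover have "sin (\<theta> - a/2) = - sin (a/2 - \<theta>)" by (metis minus_diff_eq sin_minus)
    ultimately show False using assms by linarith
  next
    case 3 then have "sin (\<theta> - a + pi) < 0" using assms
    proof -
      have "sin (\<theta> - a + pi + 2*pi) < 0" using assms 3 by (intro sin_lt_zero) auto
      moreover have "sin (\<theta> - a + pi + 2*pi) = sin (\<theta> - a + pi)" by (rule sin_periodic)
      ultimately show ?thesis by linarith
    qed
    moreover have "sin (\<theta> - a + pi) = - sin (\<theta> - a)" by simp
    ultimately show False using assms by linarith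
  qed
qed

lemma sin_Arg_shift:
  assumes "z \<noteq> 0"
  shows "Im (z * cis (-\<phi>)) = cmod z * sin (Arg z - \<phi>)"
proof -
  have "Im (z * cis (-\<phi>)) = Im z * cos \<phi> - Re z * sin \<phi>" by simp
  also have "\<dots> = cmod z * (sin (Arg z) * cos \<phi> - cos (Arg z) * sin \<phi>)"
    using assms by (simp add: sin_Arg cos_Arg field_simps)
  also have "\<dots> = cmod z * sin (Arg z - \<phi>)" by (simp add: sin_diff)
  finally show ?thesis .
qed

lemma alg1:
  fixes s c x y :: real
  assumes "s^2 + c^2 = 1"
  shows "((s - y) * (x - c) - (c - x) * (y + s)) * c - ((c - x) * (x - c) + (s - y) * (y + s)) * s = (x^2 + y^2 - 1) * s"
proof -
  have "((s - y) * (x - c) - (c - x) * (y + s)) * c - ((c - x) * (x - c) + (s - y) * (y + s)) * s = (x^2 + y^2 - (s^2+c^2)) * s"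
    by (simp add: algebra_simps power2_eq_square)
  thus ?thesis using assms by simp
qed
lemma alg2:
  fixes s c x y sb cb :: real
  assumes "sb^2 + cb^2 = 1" "s = 2 * sb * cb" "c = cb^2 - sb^2"
  shows "((s - y) * (x - c) - (c - x) * (y + s)) * cb - ((c - x) * (x - c) + (s - y) * (y + s)) * sb = sb * ((x+1)^2 + y^2 - 2 - 2 * c)"
proof -
  have "((s - y) * (x - c) - (c - x) * (y + s)) * cb - ((c - x) * (x - c) + (s - y) * (y + s)) * sb = sb * ((x+1)^2 + y^2 - 2 - 2 * c) + sb*((sb^2+cb^2) - 1) * (2*x - 2*c - (sb^2+cb^2) - 1)"
    unfolding assms(2,3) by (simp add: algebra_simps power2_eq_square)
  thus ?thesis using assms(1) by simp
qed

lemma in_GG: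
  fixes w :: complex and a :: real
  assumes a: "0 < a" "a < 1" and w1: "cmod w < 1" and w2: "(Re w + 1)^2 + (Im w)^2 > 2 + 2 * cos a"
  shows "w \<in> GG a"
proof -
  define x y where "x = Re w" and "y = Im w"
  define b where "b = a/2"
  have ab: "a = 2*b" by (simp add: b_def)
  have wb: "w - cis (-a) \<noteq> 0" using w1 by auto
  define P where "P = (cis a - w) * cnj (w - cis (-a))"
  define \<rho> where "\<rho> = (cmod (w - cis (-a)))^2"
  have \<rho>: "\<rho> > 0" using wb by (simp add: \<rho>_def)
  define \<zeta> where "\<zeta> = (cis a - w) / (w - cis (-a))"
  have \<zeta>P: "\<zeta> = P / of_real \<rho>" unfolding \<zeta>_def P_def \<rho>_def by (rule complex_div_cnj)
  have ReP: "Re P = (cos a - x) * (x - cos a) + (sin a - y) * (y + sin a)"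
    unfolding P_def x_def y_def by (simp add: algebra_simps)
  have ImP: "Im P = (sin a - y) * (x - cos a) - (cos a - x) * (y + sin a)"
    unfolding P_def x_def y_def by (simp add: algebra_simps)
  have ImP1: "Im (P * cis (-a)) = (x^2 + y^2 - 1) * sin a"
  proof -
    have "Im (P * cis (-a)) = Im P * cos a - Re P * sin a" by simp
    also have "\<dots> = (x^2 + y^2 - 1) * sin a"
      unfolding ReP ImP by (rule alg1) (rule sin_cos_squared_add)
    finally show ?thesis .
  qed
  have ImP2: "Im (P * cis (-(a/2))) = sin (a/2) * ((x+1)^2 + y^2 - 2 - 2 * cos a)"
  proof -
    have "Im (P * cis (-(a/2))) = Im P * cos b - Re P * sin b" by (simp add: b_def)
    also have "\<dots> = sin b * ((x+1)^2 + y^2 - 2 - 2 * cos a)"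
      unfolding ReP ImP by (rule alg2) (use sin_cos_squared_add[of b] sin_double[of b] cos_double[of b] ab in auto)
    finally show ?thesis by (simp add: b_def)
  qed
  have xy1: "x^2 + y^2 < 1"
  proof -
    have "(cmod w)^2 < 1" using w1 by (simp add: power_less_one_iff abs_square_less_1)
    thus ?thesis by (simp add: cmod_power2 x_def y_def)
  qed
  have sa: "sin a > 0" using a pi_gt3 by (intro sin_gt_zero) auto
  have sb: "sin (a/2) > 0" using a pi_gt3 by (intro sin_gt_zero) auto
  have I1: "Im (\<zeta> * cis (-a)) < 0"
  proof -
    have "\<zeta> * cis (-a) = (P * cis (-a)) / of_real \<rho>" unfolding \<zeta>P by simp
    hence "Im (\<zeta> * cis (-a)) = Im (P * cis (-a)) / \<rho>" by (simp only: Im_divide_of_real)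
    thus ?thesis using ImP1 \<rho> sa xy1 by (simp add: divide_neg_pos mult_neg_pos)
  qed
  have I2: "Im (\<zeta> * cis (-(a/2))) > 0"
  proof -
    have "\<zeta> * cis (-(a/2)) = (P * cis (-(a/2))) / of_real \<rho>" unfolding \<zeta>P by simp
    hence "Im (\<zeta> * cis (-(a/2))) = Im (P * cis (-(a/2))) / \<rho>" by (simp only: Im_divide_of_real)
    thus ?thesis using ImP2 \<rho> sb w2 unfolding x_def y_def by simp
  qed
  have z0: "\<zeta> \<noteq> 0" using I1 by auto
  have "sin (Arg \<zeta> - a) < 0" using I1 sin_Arg_shift[OF z0, of a] z0
    by (metis mult_less_0_iff norm_ge_zero not_less zero_less_norm_iff)
  moreover have "sin (Arg \<zeta> - a/2) > 0" using I2 sin_Arg_shift[OF z0, of "a/2"] z0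
    by (metis zero_less_mult_pos zero_less_norm_iff)
  ultimately have "a/2 < Arg \<zeta> \<and> Arg \<zeta> < a"
    using Arg_bounded[of \<zeta>] a pi_gt3 by (intro arg_window) auto
  thus ?thesis unfolding GG_def \<zeta>_def by simp
qed



lemma sin_cubic: "\<bar>sin (x::real) - x\<bar> \<le> \<bar>x\<bar>^3 / 6"
proof -
  have "\<bar>sin x - (\<Sum>m<3. sin_coeff m * x ^ m)\<bar> \<le> inverse (fact 3) * \<bar>x\<bar> ^ 3"
    by (rule Maclaurin_sin_bound)
  moreover have "(\<Sum>m<3. sin_coeff m * x ^ m) = x"
    by (simp add: sin_coeff_def eval_nat_numeral)
  moreover have "inverse (fact 3 :: real) = 1/6" by (simp add: eval_nat_numeral)
  ultimately show ?thesis by simp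
qed

lemma one_minus_cos_eq: "1 - cos (x::real) = 2 * (sin (x/2))^2"
  using cos_double_sin[of "x/2"] by simp

lemma one_minus_cos_le: "1 - cos (x::real) \<le> x^2 / 2"
proof -
  have "\<bar>sin (x/2)\<bar> \<le> \<bar>x/2\<bar>" by (rule abs_sin_x_le_abs_x)
  hence "(sin (x/2))^2 \<le> (x/2)^2" by (metis abs_le_square_iff)
  thus ?thesis unfolding one_minus_cos_eq by (simp add: power_divide)
qed

lemma sin_sq_ge: "(y::real)^2 - y^4/3 \<le> (sin y)^2"
proof -
  define A where "A = \<bar>y\<bar>"
  have A0: "0 \<le> A" by (simp add: A_def)
  have y2: "y^2 = A^2" and y4: "y^4 = A^4" and s2: "(sin y)^2 = \<bar>sin y\<bar>^2"
    by (simp_all add: A_def power_abs)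
  show ?thesis
  proof (cases "A^2 \<le> 6")
    case True
    have "A - A^3/6 \<le> \<bar>sin y\<bar>" using sin_cubic[of y] unfolding A_def by linarith
    moreover have "0 \<le> A - A^3/6"
    proof -
      have "A^3/6 = A * (A^2/6)" by (simp add: power3_eq_cube power2_eq_square)
      also have "\<dots> \<le> A * 1" using True A0 by (intro mult_left_mono) auto
      finally show ?thesis by simp
    qed
    ultimately have "(A - A^3/6)^2 \<le> \<bar>sin y\<bar>^2" by (rule power_mono)
    moreover have "(A - A^3/6)^2 = A^2 - A^4/3 + A^6/36"
      by (simp add: power2_eq_square algebra_simps eval_nat_numeral)
    moreover have "0 \<le> A^6" using A0 by simp
    ultimately show ?thesis unfolding y2 y4 s2 by linarith
  next
    case False
    have "y^2 - y^4/3 = A^2 * (1 - A^2/3)" unfolding y2 y4 by (simp add: algebra_simps eval_nat_numeral)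
    also have "\<dots> \<le> 0" using False by (intro mult_nonneg_nonpos) auto
    finally show ?thesis by (smt (verit) zero_le_power2)
  qed
qed

lemma one_minus_cos_ge: "(x::real)^2/2 - x^4/24 \<le> 1 - cos x"
proof -
  have "(x/2)^2 - (x/2)^4/3 \<le> (sin (x/2))^2" by (rule sin_sq_ge)
  thus ?thesis unfolding one_minus_cos_eq by (simp add: power_divide)
qed



lemma X_bounds:
  fixes c :: "nat \<Rightarrow> real" and \<theta> :: real and I :: "nat set"
  shows "\<theta>^2/2 * (\<Sum>j\<in>I. c j * (real j)^2) - \<theta>^4/24 * (\<Sum>j\<in>I. \<bar>c j\<bar> * (real j)^4) \<le> (\<Sum>j\<in>I. c j * (1 - cos (real j * \<theta>)))"
    and "(\<Sum>j\<in>I. c j * (1 - cos (real j * \<theta>))) \<le> \<theta>^2/2 * (\<Sum>j\<in>I. c j * (real j)^2) + \<theta>^4/24 * (\<Sum>j\<in>I. \<bar>c j\<bar> * (real j)^4)"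
proof -
  have each: "c j * (real j * \<theta>)^2/2 - \<bar>c j\<bar> * (real j * \<theta>)^4/24 \<le> c j * (1 - cos (real j * \<theta>)) \<and>
        c j * (1 - cos (real j * \<theta>)) \<le> c j * (real j * \<theta>)^2/2 + \<bar>c j\<bar> * (real j * \<theta>)^4/24" for j
  proof -
    define x where "x = real j * \<theta>"
    have l: "x^2/2 - x^4/24 \<le> 1 - cos x" by (rule one_minus_cos_ge)
    have u: "1 - cos x \<le> x^2/2" by (rule one_minus_cos_le)
    have x4: "0 \<le> x^4" by (simp add: zero_le_even_power)
    show ?thesis
    proof (cases "c j \<ge> 0")
      case True
      have "c j * (x^2/2 - x^4/24) \<le> c j * (1 - cos x)" using l True by (rule mult_left_mono)
      moreover have "c j * (1 - cos x) \<le> c j * (x^2/2)" using u True by (rule mult_left_mono)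
      ultimately show ?thesis using True x4 unfolding x_def[symmetric]
        by (simp add: algebra_simps; smt (verit) mult_nonneg_nonneg)
    next
      case False
      have "c j * (x^2/2) \<le> c j * (1 - cos x)" using u False by (intro mult_left_mono_neg) auto
      moreover have "c j * (1 - cos x) \<le> c j * (x^2/2 - x^4/24)" using l False by (intro mult_left_mono_neg) auto
      ultimately show ?thesis using False x4 unfolding x_def[symmetric]
        by (simp add: algebra_simps; smt (verit) mult_nonneg_nonneg)
    qed
  qed
  have e2: "(\<Sum>j\<in>I. c j * (real j * \<theta>)^2/2) = \<theta>^2/2 * (\<Sum>j\<in>I. c j * (real j)^2)"
    by (simp add: sum_distrib_left power_mult_distrib algebra_simps)
  have e4: "(\<Sum>j\<in>I. \<bar>c j\<bar> * (real j * \<theta>)^4/24) = \<theta>^4/24 * (\<Sum>j\<in>I. \<bar>c j\<bar> * (real j)^4)"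
    by (simp add: sum_distrib_left power_mult_distrib algebra_simps)
  have "(\<Sum>j\<in>I. c j * (real j * \<theta>)^2/2 - \<bar>c j\<bar> * (real j * \<theta>)^4/24) \<le> (\<Sum>j\<in>I. c j * (1 - cos (real j * \<theta>)))"
    using each by (intro sum_mono) auto
  thus "\<theta>^2/2 * (\<Sum>j\<in>I. c j * (real j)^2) - \<theta>^4/24 * (\<Sum>j\<in>I. \<bar>c j\<bar> * (real j)^4) \<le> (\<Sum>j\<in>I. c j * (1 - cos (real j * \<theta>)))"
    by (simp add: sum_subtractf e2 e4)
  have "(\<Sum>j\<in>I. c j * (1 - cos (real j * \<theta>))) \<le> (\<Sum>j\<in>I. c j * (real j * \<theta>)^2/2 + \<bar>c j\<bar> * (real j * \<theta>)^4/24)"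
    using each by (intro sum_mono) auto
  thus "(\<Sum>j\<in>I. c j * (1 - cos (real j * \<theta>))) \<le> \<theta>^2/2 * (\<Sum>j\<in>I. c j * (real j)^2) + \<theta>^4/24 * (\<Sum>j\<in>I. \<bar>c j\<bar> * (real j)^4)"
    by (simp add: sum.distrib e2 e4)
qed

lemma Y_bound:
  fixes c :: "nat \<Rightarrow> real" and \<theta> :: real and I :: "nat set"
  shows "\<bar>(\<Sum>j\<in>I. c j * sin (real j * \<theta>))\<bar> \<le> \<bar>\<theta>\<bar> * \<bar>\<Sum>j\<in>I. c j * real j\<bar> + \<bar>\<theta>\<bar>^3/6 * (\<Sum>j\<in>I. \<bar>c j\<bar> * (real j)^3)"
proof -
  have "(\<Sum>j\<in>I. c j * sin (real j * \<theta>)) = \<theta> * (\<Sum>j\<in>I. c j * real j) + (\<Sum>j\<in>I. c j * (sin (real j * \<theta>) - real j * \<theta>))"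
    by (simp add: sum_distrib_left algebra_simps sum.distrib[symmetric])
  moreover have "\<bar>\<Sum>j\<in>I. c j * (sin (real j * \<theta>) - real j * \<theta>)\<bar> \<le> (\<Sum>j\<in>I. \<bar>c j\<bar> * (\<bar>real j * \<theta>\<bar>^3/6))"
  proof -
    have "\<bar>\<Sum>j\<in>I. c j * (sin (real j * \<theta>) - real j * \<theta>)\<bar> \<le> (\<Sum>j\<in>I. \<bar>c j * (sin (real j * \<theta>) - real j * \<theta>)\<bar>)"
      by (rule sum_abs)
    also have "\<dots> \<le> (\<Sum>j\<in>I. \<bar>c j\<bar> * (\<bar>real j * \<theta>\<bar>^3/6))"
    proof (intro sum_mono)
      fix j assume "j \<in> I"
      have "\<bar>sin (real j * \<theta>) - real j * \<theta>\<bar> \<le> \<bar>real j * \<theta>\<bar>^3/6" by (rule sin_cubic)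
      hence "\<bar>c j\<bar> * \<bar>sin (real j * \<theta>) - real j * \<theta>\<bar> \<le> \<bar>c j\<bar> * (\<bar>real j * \<theta>\<bar>^3/6)"
        by (rule mult_left_mono) simp
      thus "\<bar>c j * (sin (real j * \<theta>) - real j * \<theta>)\<bar> \<le> \<bar>c j\<bar> * (\<bar>real j * \<theta>\<bar>^3/6)"
        by (simp only: abs_mult)
    qed
    finally show ?thesis .
  qed
  moreover have "(\<Sum>j\<in>I. \<bar>c j\<bar> * (\<bar>real j * \<theta>\<bar>^3/6)) = \<bar>\<theta>\<bar>^3/6 * (\<Sum>j\<in>I. \<bar>c j\<bar> * (real j)^3)"
    by (simp add: sum_distrib_left abs_mult power_mult_distrib algebra_simps)
  moreover have "\<bar>\<theta> * (\<Sum>j\<in>I. c j * real j)\<bar> = \<bar>\<theta>\<bar> * \<bar>\<Sum>j\<in>I. c j * real j\<bar>" by (rule abs_mult)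
  ultimately show ?thesis by linarith
qed



lemma ev1: "eventually (\<lambda>x::real. sqrt x + x / (4 * (ln x)^2) < 15/16 * x / (ln (x+3))^2) at_top"
  by real_asymp

lemma ln_j3_ge1: "1 \<le> ln (real j + 3)"
  using ln3_lb by (smt (verit) ln_le_cancel_iff of_nat_0_le_iff)

lemma rs_large:
  obtains R :: real where "R \<ge> 16" "\<And>r rs. real r \<ge> R \<Longrightarrow> rs \<le> r \<Longrightarrow>
     (\<Sum>j=rs+1..r. 1 / (ln (real j + 3))\<^sup>2) \<le> (\<Sum>j=1..rs. 1 / (ln (real j + 3))\<^sup>2) \<Longrightarrow> real r \<le> 16 * real rs"
proof -
  from ev1 obtain R0 where R0: "\<And>x. x \<ge> R0 \<Longrightarrow> sqrt x + x / (4 * (ln x)^2) < 15/16 * x / (ln (x+3))^2"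
    by (auto simp: eventually_at_top_linorder)
  define R where "R = max R0 16"
  show ?thesis
  proof (rule that[of R])
    show "R \<ge> 16" by (simp add: R_def)
    fix r rs :: nat
    assume r: "real r \<ge> R" and rsr: "rs \<le> r"
      and cond: "(\<Sum>j=rs+1..r. 1 / (ln (real j + 3))\<^sup>2) \<le> (\<Sum>j=1..rs. 1 / (ln (real j + 3))\<^sup>2)"
    show "real r \<le> 16 * real rs"
    proof (rule ccontr)
      assume "\<not> real r \<le> 16 * real rs"
      hence small: "16 * real rs < real r" by simp
      have r16: "real r \<ge> 16" using r by (simp add: R_def)
      define f where "f j = 1 / (ln (real j + 3))\<^sup>2" for j :: nat
      define q where "q = nat \<lfloor>sqrt (real r)\<rfloor>"
      have q_le: "real q \<le> sqrt (real r)" unfolding q_def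
        by (simp add: of_nat_nat)
      have qeq: "real q = of_int \<lfloor>sqrt (real r)\<rfloor>" unfolding q_def by simp
      have q_gt: "sqrt (real r) < real q + 1" unfolding qeq using floor_correct[of "sqrt (real r)"] by simp
      have lnr: "ln (real r) > 0" using r16 by simp
      have f1: "f j \<le> 1" for j
        unfolding f_def using ln_j3_ge1[of j] by (simp add: power_le_one_iff divide_le_eq_1 one_le_power)
      have f2: "f j \<le> 4 / (ln (real r))^2" if "q < j" for j
      proof -
        have "sqrt (real r) \<le> real j + 3" using q_gt that by linarith
        hence "ln (sqrt (real r)) \<le> ln (real j + 3)" using r16 by (subst ln_le_cancel_iff) auto
        moreover have "ln (sqrt (real r)) = ln (real r) / 2" using r16 by (simp add: ln_sqrt)
        ultimately have "ln (real r) / 2 \<le> ln (real j + 3)" by simp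
        hence "(ln (real r) / 2)^2 \<le> (ln (real j + 3))^2" using lnr by (intro power_mono) auto
        hence "1 / (ln (real j + 3))^2 \<le> 1 / (ln (real r) / 2)^2" using lnr
          by (intro divide_left_mono) auto
        thus ?thesis unfolding f_def by (simp add: power_divide)
      qed
      define m where "m = min rs q"
      have upper: "(\<Sum>j=1..rs. f j) \<le> real q + real rs * (4 / (ln (real r))^2)"
      proof -
        have "{1..rs} = {1..m} \<union> {m+1..rs}" unfolding m_def by auto
        hence "(\<Sum>j=1..rs. f j) = (\<Sum>j=1..m. f j) + (\<Sum>j=m+1..rs. f j)"
          by (simp add: sum.union_disjoint)
        also have "(\<Sum>j=1..m. f j) \<le> real (card {1..m}) * 1"
          by (rule sum_bounded_above) (rule f1)
        also have "(\<Sum>j=m+1..rs. f j) \<le> real (card {m+1..rs}) * (4 / (ln (real r))^2)"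
        proof (rule sum_bounded_above)
          fix j assume "j \<in> {m+1..rs}"
          hence "q < j" unfolding m_def by auto
          thus "f j \<le> 4 / (ln (real r))^2" by (rule f2)
        qed
        also have "real (card {1..m}) * 1 \<le> real q" unfolding m_def by simp
        also have "real (card {m+1..rs}) \<le> real rs" by simp
        hence "real (card {m+1..rs}) * (4 / (ln (real r))^2) \<le> real rs * (4 / (ln (real r))^2)"
          by (intro mult_right_mono) auto
        finally show ?thesis by simp
      qed
      have lower: "real (r - rs) * (1 / (ln (real r + 3))^2) \<le> (\<Sum>j=rs+1..r. f j)"
      proof -
        have "real (card {rs+1..r}) * (1 / (ln (real r + 3))^2) \<le> (\<Sum>j=rs+1..r. f j)"
        proof (rule sum_bounded_below)
          fix j assume j: "j \<in> {rs+1..r}"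
          have "ln (real j + 3) \<le> ln (real r + 3)" using j by (subst ln_le_cancel_iff) auto
          hence "(ln (real j + 3))^2 \<le> (ln (real r + 3))^2" using ln_j3_ge1[of j] by (intro power_mono) auto
          thus "1 / (ln (real r + 3))^2 \<le> f j" unfolding f_def using ln_j3_ge1[of j]
            by (intro divide_left_mono) auto
        qed
        thus ?thesis by simp
      qed
      have A: "real q + real rs * (4 / (ln (real r))^2) \<le> sqrt (real r) + real r / (4 * (ln (real r))^2)"
      proof -
        have "real rs * (4 / (ln (real r))^2) \<le> (real r / 16) * (4 / (ln (real r))^2)"
          using small lnr by (intro mult_right_mono) auto
        thus ?thesis using q_le by (simp add: field_simps)
      qed
      have B: "15/16 * real r / (ln (real r + 3))^2 \<le> real (r - rs) * (1 / (ln (real r + 3))^2)"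
      proof -
        have "15/16 * real r \<le> real (r - rs)" using small rsr by (simp add: of_nat_diff)
        hence "15/16 * real r * (1 / (ln (real r + 3))^2) \<le> real (r - rs) * (1 / (ln (real r + 3))^2)"
          by (intro mult_right_mono) auto
        thus ?thesis by simp
      qed
      have "sqrt (real r) + real r / (4 * (ln (real r))^2) < 15/16 * real r / (ln (real r + 3))^2"
        using R0 r unfolding R_def by simp
      thus False using A B upper lower cond unfolding f_def by linarith
    qed
  qed
qed



lemma inv_ge: "0 < (x::real) \<Longrightarrow> x \<le> b \<Longrightarrow> 1 / b \<le> 1 / x"
  by (rule divide_left_mono) auto


lemma rr_bounds:
  assumes "0 < a"
  shows "real (rr a) \<le> 1 / sqrt a" "1 / sqrt a - 1 \<le> real (rr a)"
proof -
  have e: "a powr (-1/2) = 1 / sqrt a"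
  proof -
    have "a powr (-1/2) = a powr (-(1/2))" by (simp only: minus_divide_left)
    also have "\<dots> = inverse (a powr (1/2))" by (rule powr_minus)
    also have "\<dots> = inverse (sqrt a)" using assms by (simp only: powr_half_sqrt less_imp_le)
    also have "\<dots> = 1 / sqrt a" by (rule inverse_eq_divide)
    finally show ?thesis .
  qed
  have pos: "0 \<le> 1 / sqrt a" using assms by simp
  have "real (rr a) = of_int \<lfloor>1 / sqrt a\<rfloor>" unfolding rr_def e using pos by simp
  thus "real (rr a) \<le> 1 / sqrt a" "1 / sqrt a - 1 \<le> real (rr a)"
    using floor_correct[of "1 / sqrt a"] by linarith+
qed

lemma dd_eq: "dd a j = lam a * (1 / ((real j)^2 * (ln (real j + 3))^2))"
  unfolding dd_def by simp

lemma dd_nonneg: "lam a \<ge> 0 \<Longrightarrow> dd a j \<ge> 0"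
  unfolding dd_def by simp

lemma w_mono: "1 \<le> i \<Longrightarrow> i \<le> j \<Longrightarrow> 1 / ((real j)^2 * (ln (real j + 3))^2) \<le> 1 / ((real i)^2 * (ln (real i + 3))^2)"
proof -
  assume ij: "1 \<le> i" "i \<le> j"
  have l: "1 \<le> ln (real i + 3)" using ln_j3_ge1 .
  have "ln (real i + 3) \<le> ln (real j + 3)" using ij by simp
  hence "(ln (real i + 3))^2 \<le> (ln (real j + 3))^2" using l by (intro power_mono) auto
  moreover have "(real i)^2 \<le> (real j)^2" using ij by (intro power_mono) auto
  ultimately have "(real i)^2 * (ln (real i + 3))^2 \<le> (real j)^2 * (ln (real j + 3))^2"
    by (intro mult_mono) auto
  moreover have "0 < (real i)^2 * (ln (real i + 3))^2" using ij l by simp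
  ultimately show ?thesis by (intro divide_left_mono) auto
qed

lemma W_bounds:
  assumes r: "r \<ge> 3"
  shows "(\<Sum>j=1..r. 1 / ((real j)^2 * (ln (real j + 3))^2)) \<ge> 55/100"
    and "(\<Sum>j=1..r. 1 / ((real j)^2 * (ln (real j + 3))^2)) \<le> 2"
proof -
  define w where "w j = 1 / ((real j)^2 * (ln (real j + 3))^2)" for j :: nat
  have wnn: "w j \<ge> 0" for j unfolding w_def by simp
  have "(\<Sum>j\<in>{1,2,3}. w j) \<le> (\<Sum>j=1..r. w j)" using r wnn by (intro sum_mono2) auto
  moreover have "(\<Sum>j\<in>{1,2,3}. w j) = w 1 + w 2 + w 3" by simp
  moreover have "w 1 \<ge> 4/9"
  proof -
    have "(ln (4::real))^2 \<le> (3/2)^2" using ln4_ub ln4_lb by (intro power_mono) auto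
    hence "1 / ((3/2)^2) \<le> 1 / (ln (4::real))^2" by (rule inv_ge[rotated]) (use ln4_lb in simp)
    moreover have "w 1 = 1 / (ln 4)^2" unfolding w_def by simp
    ultimately show ?thesis by (simp add: power2_eq_square)
  qed
  moreover have "w 2 \<ge> 25/289"
  proof -
    have "(ln (5::real))^2 \<le> (17/10)^2" using ln5_ub ln5_lb by (intro power_mono) auto
    hence "4 * (ln (5::real))^2 \<le> 4 * (17/10)^2" by simp
    hence "1 / (4 * (17/10)^2) \<le> 1 / (4 * (ln (5::real))^2)" by (rule inv_ge[rotated]) (use ln5_lb in simp)
    moreover have "w 2 = 1 / (4 * (ln 5)^2)" unfolding w_def by simp
    ultimately show ?thesis by (simp add: power2_eq_square)
  qed
  moreover have "w 3 \<ge> 1/36"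
  proof -
    have "1 \<le> ln (real (3::nat) + 3)" by (rule ln_j3_ge1)
    hence l6: "ln (6::real) \<ge> 1" by simp
    hence "(ln (6::real))^2 \<le> 2^2" using ln6_ub by (intro power_mono) auto
    hence "9 * (ln (6::real))^2 \<le> 9 * 2^2" by simp
    hence "1 / (9 * 2^2) \<le> 1 / (9 * (ln (6::real))^2)" by (rule inv_ge[rotated]) (use l6 in simp)
    moreover have "w 3 = 1 / (9 * (ln 6)^2)" unfolding w_def by simp
    ultimately show ?thesis by simp
  qed
  ultimately have "55/100 \<le> (\<Sum>j=1..r. w j)" by linarith
  thus "(\<Sum>j=1..r. 1 / ((real j)^2 * (ln (real j + 3))^2)) \<ge> 55/100"
    unfolding w_def .
  have "(\<Sum>j=1..r. w j) \<le> (\<Sum>j=1..r. 1 / (real j)^2)"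
  proof (intro sum_mono)
    fix j assume j: "j \<in> {1..r}"
    have "1 \<le> (ln (real j + 3))^2" using ln_j3_ge1[of j] by (simp add: one_le_power)
    hence "(real j)^2 * 1 \<le> (real j)^2 * (ln (real j + 3))^2" by (intro mult_left_mono) auto
    thus "w j \<le> 1 / (real j)^2" unfolding w_def using j by (intro divide_left_mono) auto
  qed
  thus "(\<Sum>j=1..r. 1 / ((real j)^2 * (ln (real j + 3))^2)) \<le> 2"
    using inv_sq_sum[of r] unfolding w_def by linarith
qed



definition Nd :: "real \<Rightarrow> nat \<Rightarrow> real" where
  "Nd a rs = (\<Sum>j=rs+1..rr a. dd a j)"

lemma common:
  assumes a: "0 < a" "2000 \<le> 1 / sqrt a" and rs: "rstar_ok a rs" "real (rr a) \<le> 16 * real rs"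
  shows "1999 \<le> real (rr a)" and "124 \<le> real rs" and "rs \<le> rr a"
    and "1/2 \<le> lam a" and "lam a \<le> 20/11"
    and "(\<Sum>j=1..rr a. dd a j) = 1"
    and "0 \<le> Nd a rs" and "Nd a rs \<le> lam a / (real rs * (ln (real rs + 3))^2)" and "Nd a rs \<le> 1/40"
    and "(\<Sum>j=1..rr a. eps rs j * dd a j) = 1 - 2 * Nd a rs"
    and "lamt a rs = 1 / (1 - 2 * Nd a rs)"
    and "(\<Sum>j=1..rs. dd a j) = 1 - Nd a rs"
proof -
  define r where "r = rr a"
  show r1999: "1999 \<le> real (rr a)" using rr_bounds(2)[OF a(1)] a(2) by linarith
  show rs124: "124 \<le> real rs" using r1999 rs(2) by linarith
  show rsr: "rs \<le> rr a" using rs(1) unfolding rstar_ok_def by simp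
  define W where "W = (\<Sum>j=1..r. 1 / ((real j)^2 * (ln (real j + 3))^2))"
  have r3: "r \<ge> 3" using r1999 unfolding r_def by linarith
  have W1: "55/100 \<le> W" and W2: "W \<le> 2" using W_bounds[OF r3] unfolding W_def by auto
  have lamW: "lam a = 1 / W" unfolding lam_def W_def r_def by simp
  show lam1: "1/2 \<le> lam a" unfolding lamW using W1 W2 by (simp add: field_simps)
  show lam2: "lam a \<le> 20/11" unfolding lamW using W1 by (simp add: field_simps)
  have ddsum: "(\<Sum>j=1..r. dd a j) = lam a * W" unfolding W_def dd_eq by (simp add: sum_distrib_left)
  show dsum: "(\<Sum>j=1..rr a. dd a j) = 1" using ddsum W1 unfolding lamW r_def by simp
  have ddnn: "0 \<le> dd a j" for j using lam1 by (intro dd_nonneg) simp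
  show Nd0: "0 \<le> Nd a rs" unfolding Nd_def using ddnn by (simp add: sum_nonneg)
  have rs1: "rs \<ge> 1" using rs124 by simp
  define Lr where "Lr = ln (real rs + 3)"
  have Lr1: "1 \<le> Lr" unfolding Lr_def by (rule ln_j3_ge1)
  have "Nd a rs \<le> (\<Sum>j=rs+1..rr a. lam a * (1 / (real j)^2) / Lr^2)"
    unfolding Nd_def
  proof (rule sum_mono)
    fix j assume j: "j \<in> {rs+1..rr a}"
    have "Lr \<le> ln (real j + 3)" unfolding Lr_def using j by simp
    hence "Lr^2 \<le> (ln (real j + 3))^2" using Lr1 by (intro power_mono) auto
    hence "(real j)^2 * Lr^2 \<le> (real j)^2 * (ln (real j + 3))^2" by (intro mult_left_mono) auto
    hence "lam a / ((real j)^2 * (ln (real j + 3))^2) \<le> lam a / ((real j)^2 * Lr^2)"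
      using lam1 Lr1 j by (intro divide_left_mono) auto
    thus "dd a j \<le> lam a * (1 / (real j)^2) / Lr^2" unfolding dd_def by simp
  qed
  also have "\<dots> = lam a / Lr^2 * (\<Sum>j=rs+1..rr a. 1 / (real j)^2)"
    by (simp add: sum_distrib_left sum_divide_distrib[symmetric] algebra_simps)
  also have "\<dots> \<le> lam a / Lr^2 * (1 / real rs)"
    using inv_sq_tail[OF rs1, of "rr a"] lam1 by (intro mult_left_mono) auto
  finally show Ndb: "Nd a rs \<le> lam a / (real rs * (ln (real rs + 3))^2)" unfolding Lr_def by (simp add: mult.commute)
  have "lam a / (real rs * (ln (real rs + 3))^2) \<le> 2 / real rs"
  proof -
    have "lam a / (real rs * (ln (real rs + 3))^2) \<le> lam a / (real rs * 1)"
      using Lr1 lam1 rs1 unfolding Lr_def[symmetric] by (intro divide_left_mono mult_left_mono) (auto simp: one_le_power)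
    also have "\<dots> \<le> 2 / real rs" using lam2 rs1 by (simp add: divide_right_mono)
    finally show ?thesis .
  qed
  moreover have "2 / real rs \<le> 1/40" using rs124 by (simp add: field_simps)
  ultimately show Nd40: "Nd a rs \<le> 1/40" using Ndb by linarith
  have split: "{1..rr a} = {1..rs} \<union> {rs+1..rr a}" using rsr by auto
  have "(\<Sum>j=1..rr a. eps rs j * dd a j) = (\<Sum>j=1..rs. eps rs j * dd a j) + (\<Sum>j=rs+1..rr a. eps rs j * dd a j)"
    unfolding split by (rule sum.union_disjoint) auto
  also have "(\<Sum>j=1..rs. eps rs j * dd a j) = (\<Sum>j=1..rs. dd a j)" by (intro sum.cong) (auto simp: eps_def)
  also have "(\<Sum>j=rs+1..rr a. eps rs j * dd a j) = - Nd a rs" unfolding Nd_def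
    by (simp add: sum_negf[symmetric] eps_def)
  also have dpos: "(\<Sum>j=1..rs. dd a j) = 1 - Nd a rs"
  proof -
    have "(\<Sum>j=1..rr a. dd a j) = (\<Sum>j=1..rs. dd a j) + Nd a rs"
      unfolding split Nd_def by (rule sum.union_disjoint) auto
    thus ?thesis using dsum by simp
  qed
  finally show seq: "(\<Sum>j=1..rr a. eps rs j * dd a j) = 1 - 2 * Nd a rs" by simp
  show "lamt a rs = 1 / (1 - 2 * Nd a rs)" unfolding lamt_def seq ..
  show "(\<Sum>j=1..rs. dd a j) = 1 - Nd a rs" by (rule dpos)
qed



lemma M_bound: "(\<Sum>j=1..r. 1 / (real j * (ln (real j + 3))^2)) \<le> 41/20"
proof -
  define f where "f j = 1 / (real j * (ln (real j + 3))^2)" for j :: nat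
  have fnn: "0 \<le> f j" for j unfolding f_def by simp
  have "(\<Sum>j=1..r. f j) \<le> (\<Sum>j\<in>{1,2} \<union> {3..r}. f j)"
    using fnn by (intro sum_mono2) auto
  also have "\<dots> \<le> (\<Sum>j\<in>{1,2}. f j) + (\<Sum>j=3..r. f j)"
  proof -
    have "(\<Sum>j\<in>{1,2} \<union> {3..r}. f j) = (\<Sum>j\<in>{1,2}. f j) + (\<Sum>j=3..r. f j) - (\<Sum>j\<in>{1,2} \<inter> {3..r}. f j)"
      by (rule sum_Un) auto
    moreover have "0 \<le> (\<Sum>j\<in>{1,2} \<inter> {3..r}. f j)" using fnn by (intro sum_nonneg) auto
    ultimately show ?thesis by linarith
  qed
  also have "(\<Sum>j\<in>{1,2}. f j) = f 1 + f 2" by simp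
  also have "(\<Sum>j=3..r. f j) \<le> 2 / ln 5"
  proof (cases "r \<ge> 2")
    case True
    have "0 \<le> 2 / ln (real r + 3)" using ln_j3_ge1[of r] by simp
    thus ?thesis using tele_sum[OF True] unfolding f_def by linarith
  next
    case False then have "{3..r} = {}" by auto
    thus ?thesis using ln5_lb by simp
  qed
  also have "f 1 \<le> 1 / (135/100)^2"
  proof -
    have "(135/100)^2 \<le> (ln (4::real))^2" using ln4_lb by (intro power_mono) auto
    hence "1 / (ln (4::real))^2 \<le> 1 / (135/100)^2" by (rule inv_ge[rotated]) simp
    thus ?thesis unfolding f_def by simp
  qed
  also have "f 2 \<le> 1 / (2 * (155/100)^2)"
  proof -
    have "(155/100)^2 \<le> (ln (5::real))^2" using ln5_lb by (intro power_mono) auto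
    hence "2 * (155/100)^2 \<le> 2 * (ln (5::real))^2" by simp
    hence "1 / (2 * (ln (5::real))^2) \<le> 1 / (2 * (155/100)^2)" by (rule inv_ge[rotated]) simp
    thus ?thesis unfolding f_def by simp
  qed
  also have "2 / ln 5 \<le> 2 / (155/100::real)" using ln5_lb by (intro divide_left_mono) auto
  finally show ?thesis unfolding f_def by (simp add: power2_eq_square)
qed



lemma part1:
  assumes a: "0 < a" "2000 \<le> 1 / sqrt a" and rs: "rstar_ok a rs" "real (rr a) \<le> 16 * real rs"
    and t: "\<bar>t\<bar> \<le> 1/100 * a"
  shows "hh a rs (cis (2 * pi * t)) \<in> GG a"
proof -
  note cm = common[OF a rs]
  define r where "r = rr a"
  define N where "N = Nd a rs"
  define lt where "lt = lamt a rs"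
  define \<mu> where "\<mu> = lt * lam a"
  define \<theta> where "\<theta> = 2 * pi * t"
  define c where "c j = lt * (eps rs j * dd a j)" for j
  define u where "u = 1 / sqrt a"
  define L where "L j = ln (real j + 3)" for j :: nat
  have L1: "1 \<le> L j" for j unfolding L_def by (rule ln_j3_ge1)
  have u2000: "2000 \<le> u" using a unfolding u_def by simp
  have au: "a * u^2 = 1" unfolding u_def using a by (simp add: power_divide)
  have asmall: "a \<le> 1 / 4000000"
  proof -
    have "2000^2 \<le> u^2" using u2000 by (intro power_mono) auto
    hence "a * 2000^2 \<le> a * u^2" using a by (intro mult_left_mono) auto
    thus ?thesis using au by simp
  qed
  have N0: "0 \<le> N" and N40: "N \<le> 1/40" using cm(7,9) unfolding N_def by auto
  have lt_eq: "lt = 1 / (1 - 2 * N)" using cm(11) unfolding lt_def N_def .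
  have lt1: "1 \<le> lt" unfolding lt_eq using N0 N40 by (simp add: field_simps)
  have lt2: "lt \<le> 20/19" unfolding lt_eq using N0 N40 by (simp add: field_simps)
  have mu1: "1/2 \<le> \<mu>"
  proof -
    have "1 * (1/2) \<le> lt * lam a" using lt1 cm(4) by (intro mult_mono) auto
    thus ?thesis unfolding \<mu>_def by simp
  qed
  have mu2: "\<mu> \<le> 192/100"
  proof -
    have "lt * lam a \<le> (20/19) * (20/11)" using lt2 cm(5) cm(4) lt1 by (intro mult_mono) auto
    thus ?thesis unfolding \<mu>_def by simp
  qed
  have ddnn: "0 \<le> dd a j" for j using cm(4) by (intro dd_nonneg) simp
  have csum: "(\<Sum>j=1..r. c j) = 1"
  proof -
    have "(\<Sum>j=1..r. c j) = lt * (\<Sum>j=1..r. eps rs j * dd a j)" unfolding c_def by (simp add: sum_distrib_left)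
    also have "\<dots> = 1" unfolding r_def cm(10) lt_eq N_def using N40 unfolding N_def by simp
    finally show ?thesis .
  qed
  have eps_abs: "\<bar>eps rs j\<bar> = 1" for j unfolding eps_def by simp
  have cabs: "\<bar>c j\<bar> = lt * dd a j" for j
    unfolding c_def using lt1 ddnn[of j] eps_abs[of j] by (simp add: abs_mult)
  have ddj: "dd a j * (real j)^2 = lam a / (L j)^2" if "j \<ge> 1" for j
    unfolding dd_def L_def using that by (simp add: field_simps)
  define S where "S = (\<Sum>j=1..r. eps rs j / (L j)^2)"
  have S_eq: "S = (\<Sum>j=1..rs. 1 / (ln (real j + 3))\<^sup>2) - (\<Sum>j=rs+1..r. 1 / (ln (real j + 3))\<^sup>2)"
  proof -
    have split: "{1..r} = {1..rs} \<union> {rs+1..r}" using cm(3) unfolding r_def by auto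
    have "S = (\<Sum>j=1..rs. eps rs j / (L j)^2) + (\<Sum>j=rs+1..r. eps rs j / (L j)^2)"
      unfolding S_def split by (rule sum.union_disjoint) auto
    also have "(\<Sum>j=1..rs. eps rs j / (L j)^2) = (\<Sum>j=1..rs. 1 / (ln (real j + 3))\<^sup>2)"
      by (intro sum.cong) (auto simp: eps_def L_def)
    also have "(\<Sum>j=rs+1..r. eps rs j / (L j)^2) = - (\<Sum>j=rs+1..r. 1 / (ln (real j + 3))\<^sup>2)"
      by (simp add: sum_negf[symmetric] eps_def L_def)
    finally show ?thesis by simp
  qed
  have S20: "20 \<le> S" and S21: "S \<le> 21" using rs(1) unfolding rstar_ok_def S_eq r_def Let_def by auto
  have m2: "(\<Sum>j\<in>{1..r}. c j * (real j)^2) = \<mu> * S"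
  proof -
    have "(\<Sum>j\<in>{1..r}. c j * (real j)^2) = (\<Sum>j\<in>{1..r}. \<mu> * (eps rs j / (L j)^2))"
    proof (intro sum.cong refl)
      fix j assume "j \<in> {1..r}"
      hence "dd a j * (real j)^2 = lam a / (L j)^2" by (intro ddj) auto
      have "c j * (real j)^2 = lt * eps rs j * (dd a j * (real j)^2)" unfolding c_def by (simp add: algebra_simps)
      also have "\<dots> = lt * eps rs j * (lam a / (L j)^2)" using \<open>dd a j * (real j)^2 = lam a / (L j)^2\<close> by simp
      finally show "c j * (real j)^2 = \<mu> * (eps rs j / (L j)^2)" unfolding \<mu>_def by simp
    qed
    thus ?thesis unfolding S_def by (simp add: sum_distrib_left)
  qed
  have cabsj: "\<bar>c j\<bar> * (real j)^2 = \<mu> / (L j)^2" if "j \<ge> 1" for j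
  proof -
    have "\<bar>c j\<bar> * (real j)^2 = lt * (dd a j * (real j)^2)" unfolding cabs by (simp add: algebra_simps)
    also have "\<dots> = lt * (lam a / (L j)^2)" using ddj[OF that] by simp
    finally show ?thesis unfolding \<mu>_def by simp
  qed
  have mu_L: "\<mu> / (L j)^2 \<le> \<mu>" for j
  proof -
    have "1 \<le> (L j)^2" using L1[of j] by (simp add: one_le_power)
    hence "\<mu> / (L j)^2 \<le> \<mu> / 1" using mu1 by (intro divide_left_mono) auto
    thus ?thesis by simp
  qed
  have rr_u: "real r \<le> u" using rr_bounds(1)[OF a(1)] unfolding r_def u_def .
  have r0: "0 \<le> real r" by simp
  have m4: "(\<Sum>j\<in>{1..r}. \<bar>c j\<bar> * (real j)^4) \<le> \<mu> * (real r)^3"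
  proof -
    have "(\<Sum>j\<in>{1..r}. \<bar>c j\<bar> * (real j)^4) \<le> real (card {1..r}) * (\<mu> * (real r)^2)"
    proof (rule sum_bounded_above)
      fix j assume j: "j \<in> {1..r}"
      have "\<bar>c j\<bar> * (real j)^4 = (\<bar>c j\<bar> * (real j)^2) * (real j)^2"
        by (simp add: mult.assoc flip: power_add)
      also have "\<dots> = (\<mu> / (L j)^2) * (real j)^2" using cabsj[of j] j by simp
      finally have "\<bar>c j\<bar> * (real j)^4 = (\<mu> / (L j)^2) * (real j)^2" .
      also have "\<dots> \<le> \<mu> * (real j)^2"
      proof -
        have "\<mu> / (L j)^2 \<le> \<mu>" by (rule mu_L)
        thus ?thesis by (intro mult_right_mono) auto
      qed
      also have "\<dots> \<le> \<mu> * (real r)^2" using j mu1 by (intro mult_left_mono power_mono) auto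
      finally show "\<bar>c j\<bar> * (real j)^4 \<le> \<mu> * (real r)^2" .
    qed
    thus ?thesis by (simp add: power2_eq_square power3_eq_cube algebra_simps)
  qed
  have m3: "(\<Sum>j\<in>{1..r}. \<bar>c j\<bar> * (real j)^3) \<le> \<mu> * (real r)^2"
  proof -
    have "(\<Sum>j\<in>{1..r}. \<bar>c j\<bar> * (real j)^3) \<le> real (card {1..r}) * (\<mu> * real r)"
    proof (rule sum_bounded_above)
      fix j assume j: "j \<in> {1..r}"
      have "\<bar>c j\<bar> * (real j)^3 = (\<bar>c j\<bar> * (real j)^2) * real j"
        by (simp add: power2_eq_square power3_eq_cube mult.assoc)
      also have "\<dots> = (\<mu> / (L j)^2) * real j" using cabsj[of j] j by simp
      finally have "\<bar>c j\<bar> * (real j)^3 = (\<mu> / (L j)^2) * real j" .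
      also have "\<dots> \<le> \<mu> * real j"
      proof -
        have "\<mu> / (L j)^2 \<le> \<mu>" by (rule mu_L)
        thus ?thesis by (intro mult_right_mono) auto
      qed
      also have "\<dots> \<le> \<mu> * real r" using j mu1 by (intro mult_left_mono) auto
      finally show "\<bar>c j\<bar> * (real j)^3 \<le> \<mu> * real r" .
    qed
    thus ?thesis by (simp add: power2_eq_square algebra_simps)
  qed
  have m1: "\<bar>\<Sum>j\<in>{1..r}. c j * real j\<bar> \<le> \<mu> * (41/20)"
  proof -
    have "\<bar>\<Sum>j\<in>{1..r}. c j * real j\<bar> \<le> (\<Sum>j\<in>{1..r}. \<bar>c j * real j\<bar>)" by (rule sum_abs)
    also have "\<dots> = (\<Sum>j\<in>{1..r}. \<mu> * (1 / (real j * (ln (real j + 3))^2)))"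
    proof (intro sum.cong refl)
      fix j assume j: "j \<in> {1..r}"
      have "\<bar>c j * real j\<bar> * real j = \<mu> / (L j)^2" using cabsj[of j] j by (simp add: abs_mult power2_eq_square algebra_simps)
      thus "\<bar>c j * real j\<bar> = \<mu> * (1 / (real j * (ln (real j + 3))^2))" using j unfolding L_def
        by (simp add: field_simps)
    qed
    also have "\<dots> = \<mu> * (\<Sum>j=1..r. 1 / (real j * (ln (real j + 3))^2))" by (simp add: sum_distrib_left)
    also have "\<dots> \<le> \<mu> * (41/20)" using M_bound mu1 by (intro mult_left_mono) auto
    finally show ?thesis .
  qed
  define z where "z = cis \<theta>"
  have zj: "z ^ j = cis (real j * \<theta>)" for j unfolding z_def by (rule Complex.DeMoivre)
  define ht where "ht = htilde a rs z"
  have ht_eq: "ht = (\<Sum>j=1..r. of_real (c j) * cis (real j * \<theta>))"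
    unfolding ht_def htilde_def r_def[symmetric] c_def lt_def[symmetric] zj
    by (simp add: sum_distrib_left mult.assoc)
  have Reh: "Re ht = (\<Sum>j=1..r. c j * cos (real j * \<theta>))" unfolding ht_eq by (simp add: Re_sum)
  have Imh: "Im ht = (\<Sum>j=1..r. c j * sin (real j * \<theta>))" unfolding ht_eq by (simp add: Im_sum)
  define X where "X = (\<Sum>j\<in>{1..r}. c j * (1 - cos (real j * \<theta>)))"
  define Y where "Y = Im ht"
  have XRe: "Re ht = 1 - X" unfolding Reh X_def using csum by (simp add: algebra_simps sum_subtractf)
  define T where "T = \<theta>^2"
  have T0: "0 \<le> T" unfolding T_def by simp
  have th_abs: "\<bar>\<theta>\<bar> \<le> 8/100 * a"
  proof -
    have "\<bar>\<theta>\<bar> = 2 * pi * \<bar>t\<bar>" unfolding \<theta>_def by (simp add: abs_mult)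
    also have "\<dots> \<le> 2 * 4 * (1/100 * a)" using t pi_less_4 by (intro mult_mono) auto
    finally show ?thesis by simp
  qed
  have Tb: "T \<le> 64/10000 * a^2"
  proof -
    have "\<bar>\<theta>\<bar>^2 \<le> (8/100 * a)^2" using th_abs by (intro power_mono) auto
    moreover have "(8/100 * a)^2 = 64/10000 * a^2" by (simp add: power2_eq_square)
    ultimately show ?thesis unfolding T_def by simp
  qed
  have r2: "(real r)^2 \<le> u^2" using rr_u by (intro power_mono) auto
  have r3: "(real r)^3 \<le> u^3" using rr_u by (intro power_mono) auto
  have Tr2: "T * (real r)^2 \<le> 1/10000"
  proof -
    have "T * (real r)^2 \<le> (64/10000 * a^2) * u^2" using Tb r2 T0 by (intro mult_mono) auto
    also have "\<dots> = 64/10000 * a * (a * u^2)" by (simp add: power2_eq_square)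
    also have "\<dots> = 64/10000 * a" using au by simp
    finally show ?thesis using asmall by linarith
  qed
  have Tr3: "T * (real r)^3 \<le> 1/10000"
  proof -
    have "T * (real r)^3 \<le> (64/10000 * a^2) * u^3" using Tb r3 T0 by (intro mult_mono) auto
    also have "\<dots> = 64/10000 / u * ((a * u^2) * (a * u^2))" using u2000 by (simp add: power2_eq_square power3_eq_cube field_simps)
    also have "\<dots> = 64/10000 / u" using au by simp
    also have "\<dots> \<le> 64/10000 / 2000" using u2000 by (intro divide_left_mono) auto
    finally show ?thesis by simp
  qed
  have Tmu0: "0 \<le> T * \<mu>" using T0 mu1 by simp
  have XB1: "\<theta>^2/2 * (\<mu> * S) - \<theta>^4/24 * (\<mu> * (real r)^3) \<le> X"
  proof -
    have "\<theta>^4/24 * (\<Sum>j\<in>{1..r}. \<bar>c j\<bar> * (real j)^4) \<le> \<theta>^4/24 * (\<mu> * (real r)^3)"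
      using m4 by (intro mult_left_mono) (auto simp: zero_le_even_power)
    thus ?thesis using X_bounds(1)[where c=c and I="{1..r}" and \<theta>=\<theta>] unfolding X_def m2 by linarith
  qed
  have XB2: "X \<le> \<theta>^2/2 * (\<mu> * S) + \<theta>^4/24 * (\<mu> * (real r)^3)"
  proof -
    have "\<theta>^4/24 * (\<Sum>j\<in>{1..r}. \<bar>c j\<bar> * (real j)^4) \<le> \<theta>^4/24 * (\<mu> * (real r)^3)"
      using m4 by (intro mult_left_mono) (auto simp: zero_le_even_power)
    thus ?thesis using X_bounds(2)[where c=c and I="{1..r}" and \<theta>=\<theta>] unfolding X_def m2 by linarith
  qed
  have th4: "\<theta>^4/24 * (\<mu> * (real r)^3) = (T * \<mu>) * (T * (real r)^3) / 24"
    unfolding T_def by (simp add: eval_nat_numeral algebra_simps)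
  have err: "(T * \<mu>) * (T * (real r)^3) / 24 \<le> (T * \<mu>) / 240000"
  proof -
    have "(T * \<mu>) * (T * (real r)^3) \<le> (T * \<mu>) * (1/10000)" using Tr3 Tmu0 by (intro mult_left_mono) auto
    hence "(T * \<mu>) * (T * (real r)^3) / 24 \<le> (T * \<mu>) * (1/10000) / 24" by (rule divide_right_mono) simp
    thus ?thesis by simp
  qed
  have err0: "0 \<le> (T * \<mu>) * (T * (real r)^3) / 24" using Tmu0 T0 by simp
  have mainX1: "\<theta>^2/2 * (\<mu> * S) \<ge> 10 * (T * \<mu>)"
  proof -
    have "T * \<mu> * 20 \<le> T * \<mu> * S" using S20 Tmu0 by (intro mult_left_mono) auto
    thus ?thesis unfolding T_def by (simp add: algebra_simps)
  qed
  have mainX2: "\<theta>^2/2 * (\<mu> * S) \<le> 21/2 * (T * \<mu>)"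
  proof -
    have "T * \<mu> * S \<le> T * \<mu> * 21" using S21 Tmu0 by (intro mult_left_mono) auto
    thus ?thesis unfolding T_def by (simp add: algebra_simps)
  qed
  have Xlow: "999/100 * (T * \<mu>) \<le> X" using XB1 th4 err mainX1 Tmu0 by linarith
  have Xup: "X \<le> 11 * (T * \<mu>)" using XB2 th4 err mainX2 Tmu0 by linarith
  have Tmu_small: "T * \<mu> \<le> 64/10000 * a^2 * (192/100)" using Tb mu2 T0 mu1 by (intro mult_mono) auto
  have a2small: "a^2 \<le> 1/10000"
  proof -
    have "a * a \<le> (1/100) * (1/100)" using asmall a by (intro mult_mono) auto
    thus ?thesis by (simp add: power2_eq_square)
  qed
  have X0: "0 \<le> X" using Xlow Tmu0 by linarith
  have X1: "X \<le> 1" using Xup Tmu_small a2small by linarith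
  have Ybound: "\<bar>Y\<bar> \<le> \<bar>\<theta>\<bar> * (\<mu> * (206/100))"
  proof -
    have "\<bar>Y\<bar> \<le> \<bar>\<theta>\<bar> * \<bar>\<Sum>j\<in>{1..r}. c j * real j\<bar> + \<bar>\<theta>\<bar>^3/6 * (\<Sum>j\<in>{1..r}. \<bar>c j\<bar> * (real j)^3)"
      unfolding Y_def Imh by (rule Y_bound)
    also have "\<dots> \<le> \<bar>\<theta>\<bar> * (\<mu> * (41/20)) + \<bar>\<theta>\<bar>^3/6 * (\<mu> * (real r)^2)"
      using m1 m3 by (intro add_mono mult_left_mono) auto
    also have "\<bar>\<theta>\<bar>^3/6 * (\<mu> * (real r)^2) = \<bar>\<theta>\<bar> * \<mu> * (T * (real r)^2) / 6"
      unfolding T_def by (simp add: power2_abs[symmetric] eval_nat_numeral algebra_simps)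
    also have "\<dots> \<le> \<bar>\<theta>\<bar> * \<mu> * (1/10000) / 6"
      using Tr2 mu1 by (intro divide_right_mono mult_left_mono) auto
    finally show ?thesis by (simp add: algebra_simps)
  qed
  have Y2: "Y^2 \<le> 9 * (T * \<mu>)"
  proof -
    have "\<bar>Y\<bar>^2 \<le> (\<bar>\<theta>\<bar> * (\<mu> * (206/100)))^2" using Ybound by (intro power_mono) auto
    also have "\<dots> = (T * \<mu>) * (\<mu> * (206/100)^2)" unfolding T_def by (simp add: power_mult_distrib power2_abs algebra_simps power2_eq_square)
    also have "\<dots> \<le> (T * \<mu>) * 9"
    proof -
      have "\<mu> * (206/100)^2 \<le> (192/100) * (206/100)^2" using mu2 by (intro mult_right_mono) auto
      also have "\<dots> \<le> 9" by (simp add: power2_eq_square)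
      finally show ?thesis using Tmu0 by (intro mult_left_mono) auto
    qed
    finally show ?thesis by simp
  qed
  have YX: "Y^2 \<le> X" using Y2 Xlow Tmu0 by linarith
  have ht1: "cmod ht \<le> 1"
  proof -
    have "(cmod ht)^2 = (1 - X)^2 + Y^2" unfolding cmod_power2 XRe Y_def ..
    also have "\<dots> \<le> (1 - X)^2 + X" using YX by simp
    also have "\<dots> \<le> 1"
    proof -
      have "X * X \<le> X * 1" using X0 X1 by (intro mult_left_mono) auto
      thus ?thesis by (simp add: power2_eq_square algebra_simps)
    qed
    finally show ?thesis by (simp add: power_le_one_iff abs_square_le_1)
  qed
  define w where "w = hh a rs z"
  have w_eq: "w = of_real (1 - a^10) * ht" unfolding w_def hh_def ht_def ..
  have a10: "a^10 \<le> a^2 / 100"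
  proof -
    have "a^8 \<le> a^1" using a asmall by (intro power_decreasing) auto
    hence "a^8 \<le> 1/100" using asmall by simp
    hence "a^2 * a^8 \<le> a^2 * (1/100)" by (intro mult_left_mono) auto
    thus ?thesis by (simp add: power_add[symmetric])
  qed
  have a10pos: "0 < a^10" using a by simp
  have w1: "cmod w < 1"
  proof -
    have "cmod w = (1 - a^10) * cmod ht" unfolding w_eq using a10 a2small
      by (simp add: norm_mult del: of_real_diff) 
    also have "\<dots> \<le> (1 - a^10) * 1" using ht1 a10 a2small by (intro mult_left_mono) auto
    finally have "cmod w \<le> 1 - a^10" by simp
    thus ?thesis using a10pos by linarith
  qed
  have Rew: "Re w = (1 - a^10) * (1 - X)" unfolding w_eq XRe[symmetric] by simp
  have Imw: "Im w = (1 - a^10) * Y" unfolding w_eq Y_def by simp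
  have Re_low: "2 - (a^10 + 11 * (64/10000 * a^2 * (192/100))) \<le> Re w + 1"
  proof -
    have "0 \<le> a^10 * X" using a10pos X0 by simp
    hence "1 - a^10 - X \<le> Re w" unfolding Rew by (simp add: algebra_simps)
    thus ?thesis using Xup Tmu_small by linarith
  qed
  define \<delta> where "\<delta> = a^10 + 11 * (64/10000 * a^2 * (192/100))"
  have \<delta>le: "\<delta> \<le> 15/100 * a^2" unfolding \<delta>_def using a10 zero_le_power2[of a] by linarith
  have \<delta>0: "0 \<le> \<delta>" unfolding \<delta>_def using a10pos by simp
  have \<delta>2: "\<delta> \<le> 2" using \<delta>le a2small by linarith
  have sq: "4 - 4 * \<delta> \<le> (Re w + 1)^2"
  proof -
    have "(2 - \<delta>)^2 \<le> (Re w + 1)^2" using Re_low \<delta>2 unfolding \<delta>_def[symmetric] by (intro power_mono) auto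
    moreover have "4 - 4 * \<delta> \<le> (2 - \<delta>)^2" by (simp add: power2_eq_square algebra_simps)
    ultimately show ?thesis by linarith
  qed
  have cosb: "2 + 2 * cos a \<le> 4 - a^2 + a^4/12"
    using one_minus_cos_ge[of a] by linarith
  have a4: "a^4 \<le> a^2 / 10000"
  proof -
    have "a^2 * a^2 \<le> a^2 * (1/10000)" using a2small by (intro mult_left_mono) auto
    thus ?thesis by (simp add: power_add[symmetric] eval_nat_numeral)
  qed
  have "2 + 2 * cos a < (Re w + 1)^2 + (Im w)^2"
  proof -
    have "0 < a^2" using a by simp
    hence "4 - a^2 + a^4/12 < 4 - 4 * \<delta>" using \<delta>le a4 by linarith
    moreover have "0 \<le> (Im w)^2" by simp
    ultimately show ?thesis using sq cosb by linarith
  qed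
  moreover have "a < 1" using asmall by linarith
  ultimately have "w \<in> GG a" using w1 a(1) by (intro in_GG) auto
  thus ?thesis unfolding w_def z_def \<theta>_def .
qed



lemma part2:
  assumes a: "0 < a" "2000 \<le> 1 / sqrt a" and rs: "rstar_ok a rs" "real (rr a) \<le> 16 * real rs"
    and t: "\<bar>t\<bar> \<le> 1/2" "\<bar>t\<bar> > 1152 * a powr (1/2)"
  shows "cmod (hh a rs (cis (2 * pi * t))) \<le> 1 - (1/36) * \<bar>t\<bar> / (ln (1 / a))\<^sup>2"
proof -
  note cm = common[OF a rs]
  define r where "r = rr a"
  define N where "N = Nd a rs"
  define lam' where "lam' = lam a"
  have sa: "a powr (1/2) = sqrt a" using a by (simp add: powr_half_sqrt)
  have sqa: "0 < sqrt a" using a by simp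
  define u where "u = 1 / sqrt a"
  have u2000: "2000 \<le> u" using a unfolding u_def by simp
  have "0 < 1152 * sqrt a" using sqa by simp
  hence t0: "0 < \<bar>t\<bar>" using t(2) unfolding sa by linarith
  define k where "k = nat \<lfloor>1 / (2 * \<bar>t\<bar>)\<rfloor>"
  have ge1: "1 \<le> 1 / (2 * \<bar>t\<bar>)" using t t0 by (simp add: field_simps)
  have kr: "real k = of_int \<lfloor>1 / (2 * \<bar>t\<bar>)\<rfloor>" unfolding k_def using ge1 by simp
  have kle: "real k \<le> 1 / (2 * \<bar>t\<bar>)" and kgt: "1 / (2 * \<bar>t\<bar>) - 1 < real k"
    unfolding kr using floor_correct[of "1 / (2 * \<bar>t\<bar>)"] by linarith+
  have k1: "1 \<le> k" using kgt ge1 by linarith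
  have ktle: "real k * \<bar>t\<bar> \<le> 1/2" using kle t0 by (simp add: field_simps)
  have ktge: "1/4 \<le> real k * \<bar>t\<bar>"
  proof (cases "\<bar>t\<bar> \<le> 1/4")
    case True
    have "(1 / (2 * \<bar>t\<bar>) - 1) * \<bar>t\<bar> \<le> real k * \<bar>t\<bar>" using kgt t0 by (intro mult_right_mono) auto
    moreover have "(1 / (2 * \<bar>t\<bar>) - 1) * \<bar>t\<bar> = 1/2 - \<bar>t\<bar>" using t0 by (simp add: field_simps)
    ultimately show ?thesis using True by linarith
  next
    case False
    have "1 * \<bar>t\<bar> \<le> real k * \<bar>t\<bar>" using k1 t0 by (intro mult_right_mono) auto
    thus ?thesis using False by linarith
  qed
  have rs_ge: "u / 32 \<le> real rs"
  proof -
    have "u - 1 \<le> real r" using rr_bounds(2)[OF a(1)] unfolding u_def r_def .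
    thus ?thesis using rs(2) u2000 unfolding r_def by linarith
  qed
  have k72: "72 * k \<le> rs"
  proof -
    have "72 * real k \<le> 36 / \<bar>t\<bar>" using kle t0 by (simp add: field_simps)
    also have "36 / \<bar>t\<bar> \<le> 36 / (1152 * sqrt a)" using t(2) sqa t0 unfolding sa by (intro divide_left_mono) auto
    also have "36 / (1152 * sqrt a) = u / 32" unfolding u_def by simp
    finally have "72 * real k \<le> real rs" using rs_ge by linarith
    thus ?thesis by linarith
  qed
  define z where "z = cis (2 * pi * t)"
  have z1: "cmod z = 1" unfolding z_def by simp
  have zk: "Re (z ^ k) \<le> 0"
  proof -
    have "z ^ k = cis (real k * (2 * pi * t))" unfolding z_def by (rule Complex.DeMoivre)
    hence "Re (z ^ k) = cos (real k * (2 * pi * t))" by simp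
    also have "\<dots> = cos (2 * pi * (real k * \<bar>t\<bar>))"
    proof (cases "t \<ge> 0")
      case True thus ?thesis by (simp add: algebra_simps)
    next
      case False
      hence "real k * (2 * pi * t) = - (2 * pi * (real k * \<bar>t\<bar>))" by simp
      thus ?thesis by (simp only: cos_minus)
    qed
    also have "\<dots> \<le> cos (pi / 2)"
      using ktge ktle by (intro cos_monotone_0_pi_le) (auto simp: field_simps)
    finally show ?thesis by simp
  qed
  have ddnn: "\<And>j. 0 \<le> dd a j" using cm(4) by (intro dd_nonneg) simp
  have dddec: "\<And>i j. 1 \<le> i \<Longrightarrow> i \<le> j \<Longrightarrow> dd a j \<le> dd a i"
    unfolding dd_eq using cm(4) by (intro mult_left_mono w_mono) auto
  define Dp where "Dp = (\<Sum>j=k..<2*k. dd a (j+k)) / 2"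
  have pair: "cmod (\<Sum>j=1..rs. of_real (dd a j) * z^j) \<le> (\<Sum>j=1..rs. dd a j) - Dp"
    unfolding Dp_def using ddnn dddec k1 k72 z1 zk by (intro pairing) auto
  define L3 where "L3 = ln (real (3*k) + 3)"
  have L31: "1 \<le> L3" unfolding L3_def by (rule ln_j3_ge1)
  have Dlow: "lam a / (18 * real k * L3^2) \<le> Dp"
  proof -
    have "real (card {k..<2*k}) * dd a (3*k) \<le> (\<Sum>j=k..<2*k. dd a (j+k))"
      by (rule sum_bounded_below) (use k1 in \<open>auto intro!: dddec\<close>)
    moreover have "dd a (3*k) = lam a / (9 * (real k)^2 * L3^2)" unfolding dd_def L3_def
      by (simp add: power_mult_distrib)
    ultimately have "real k * (lam a / (9 * (real k)^2 * L3^2)) \<le> 2 * Dp" unfolding Dp_def by simp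
    moreover have "real k * (lam a / (9 * (real k)^2 * L3^2)) = 2 * (lam a / (18 * real k * L3^2))"
      using k1 by (simp add: field_simps power2_eq_square)
    ultimately show ?thesis by linarith
  qed
  have NDp: "N \<le> Dp / 4"
  proof -
    have "N \<le> lam a / (real rs * (ln (real rs + 3))^2)" using cm(8) unfolding N_def .
    also have "\<dots> \<le> lam a / (72 * real k * L3^2)"
    proof (rule divide_left_mono)
      have "L3 \<le> ln (real rs + 3)" unfolding L3_def using k72 by simp
      hence "L3^2 \<le> (ln (real rs + 3))^2" using L31 by (intro power_mono) auto
      moreover have "72 * real k \<le> real rs" using k72 by linarith
      ultimately show "72 * real k * L3^2 \<le> real rs * (ln (real rs + 3))^2"
        using L31 by (intro mult_mono) auto
      show "0 \<le> lam a" using cm(4) by simp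
      show "0 < real rs * (ln (real rs + 3))\<^sup>2 * (72 * real k * L3\<^sup>2)" using cm(2) k1 L31 ln_j3_ge1[of rs] by simp
    qed
    also have "\<dots> = (lam a / (18 * real k * L3^2)) / 4" by (simp add: field_simps)
    also have "\<dots> \<le> Dp / 4" using Dlow by (rule divide_right_mono) simp
    finally show ?thesis .
  qed
  have split: "{1..r} = {1..rs} \<union> {rs+1..r}" using cm(3) unfolding r_def by auto
  have sumsplit: "(\<Sum>j=1..r. of_real (eps rs j * dd a j) * z^j) = (\<Sum>j=1..rs. of_real (dd a j) * z^j) - (\<Sum>j=rs+1..r. of_real (dd a j) * z^j)"
  proof -
    have "(\<Sum>j=1..r. of_real (eps rs j * dd a j) * z^j) = (\<Sum>j=1..rs. of_real (eps rs j * dd a j) * z^j) + (\<Sum>j=rs+1..r. of_real (eps rs j * dd a j) * z^j)"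
      unfolding split by (rule sum.union_disjoint) auto
    also have "(\<Sum>j=1..rs. of_real (eps rs j * dd a j) * z^j) = (\<Sum>j=1..rs. of_real (dd a j) * z^j)"
      by (intro sum.cong) (auto simp: eps_def)
    also have "(\<Sum>j=rs+1..r. of_real (eps rs j * dd a j) * z^j) = - (\<Sum>j=rs+1..r. of_real (dd a j) * z^j)"
      by (simp add: sum_negf[symmetric] eps_def)
    finally show ?thesis by simp
  qed
  have tail: "cmod (\<Sum>j=rs+1..r. of_real (dd a j) * z^j) \<le> N"
  proof -
    have "cmod (\<Sum>j=rs+1..r. of_real (dd a j) * z^j) \<le> (\<Sum>j=rs+1..r. cmod (of_real (dd a j) * z^j))"
      by (rule norm_sum)
    also have "\<dots> = (\<Sum>j=rs+1..r. dd a j)" using ddnn z1 by (simp add: norm_mult norm_power)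
    finally show ?thesis unfolding N_def Nd_def r_def .
  qed
  have main: "cmod (\<Sum>j=1..r. of_real (eps rs j * dd a j) * z^j) \<le> 1 - Dp"
  proof -
    have "cmod (\<Sum>j=1..r. of_real (eps rs j * dd a j) * z^j) \<le> cmod (\<Sum>j=1..rs. of_real (dd a j) * z^j) + cmod (\<Sum>j=rs+1..r. of_real (dd a j) * z^j)"
      unfolding sumsplit by (rule norm_triangle_ineq4)
    thus ?thesis using pair tail cm(12) unfolding N_def by linarith
  qed
  have N0: "0 \<le> N" and N40: "N \<le> 1/40" using cm(7,9) unfolding N_def by auto
  have lamt_eq: "lamt a rs = 1 / (1 - 2 * N)" using cm(11) unfolding N_def .
  have "cmod (hh a rs z) = (1 - a^10) * (lamt a rs * cmod (\<Sum>j=1..r. of_real (eps rs j * dd a j) * z^j))"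
  proof -
    have "a^10 \<le> 1" using a u2000 
    proof -
      have "a \<le> 1"
      proof (rule ccontr)
        assume "\<not> a \<le> 1" hence "1 < sqrt a" by simp
        hence "1 / sqrt a < 1" by simp
        thus False using a(2) by linarith
      qed
      thus ?thesis using a(1) by (simp add: power_le_one)
    qed
    moreover have "0 < lamt a rs" unfolding lamt_eq using N40 by simp
    moreover have "cmod (hh a rs z) = cmod (of_real (1 - a^10) :: complex) * (cmod (of_real (lamt a rs) :: complex) * cmod (\<Sum>j=1..r. of_real (eps rs j * dd a j) * z^j))"
      unfolding hh_def htilde_def r_def by (simp only: norm_mult)
    ultimately show ?thesis by (simp only: norm_of_real abs_of_nonneg abs_of_pos diff_ge_0_iff_ge)
  qed
  also have "\<dots> \<le> 1 * (lamt a rs * (1 - Dp))"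
  proof (rule mult_mono)
    show "1 - a^10 \<le> 1" using a by simp
    show "lamt a rs * cmod (\<Sum>j=1..r. of_real (eps rs j * dd a j) * z^j) \<le> lamt a rs * (1 - Dp)"
      using main N40 unfolding lamt_eq by (intro mult_left_mono) auto
    show "(0::real) \<le> 1" by simp
    show "0 \<le> lamt a rs * cmod (\<Sum>j=1..r. of_real (eps rs j * dd a j) * z^j)" using N40 unfolding lamt_eq by simp
  qed
  also have "\<dots> \<le> 1 - Dp / 2"
  proof -
    have "0 \<le> lam a / (18 * real k * L3^2)" using cm(4) by simp
    hence "0 \<le> Dp" using Dlow by linarith
    hence "0 \<le> Dp * N" using N0 by simp
    hence "1 - Dp \<le> (1 - Dp/2) * (1 - 2 * N)" using NDp by (simp add: algebra_simps)
    thus ?thesis unfolding lamt_eq using N40 by (simp add: field_simps)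
  qed
  also have "\<dots> \<le> 1 - (1/36) * \<bar>t\<bar> / (ln (1 / a))\<^sup>2"
  proof -
    define \<Lambda> where "\<Lambda> = (ln (1 / a))^2"
    have L3le: "L3 \<le> ln (1 / a)"
    proof -
      have "real (3*k) + 3 \<le> real rs + 3" using k72 by simp
      also have "\<dots> \<le> u + 3"
      proof -
        have "real rs \<le> real (rr a)" using cm(3) by simp
        thus ?thesis using rr_bounds(1)[OF a(1)] unfolding u_def by linarith
      qed
      also have "\<dots> \<le> u * u"
      proof -
        have "2000 * u \<le> u * u" using u2000 by (intro mult_right_mono) auto
        thus ?thesis using u2000 by linarith
      qed
      also have "u * u = 1 / a" unfolding u_def using a by (simp add: field_simps)
      finally show ?thesis unfolding L3_def using a(1) by (subst ln_le_cancel_iff) auto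
    qed
    have Lam: "L3^2 \<le> \<Lambda>" unfolding \<Lambda>_def using L3le L31 by (intro power_mono) auto
    have "1 \<le> L3^2" using L31 by (simp add: one_le_power)
    hence Lam0: "0 < \<Lambda>" using Lam by linarith
    have "(1/2) / (18 * real k * \<Lambda>) \<le> lam a / (18 * real k * L3^2)"
      using cm(4) Lam k1 L31 by (intro frac_le mult_left_mono) auto
    moreover have "\<bar>t\<bar> / (18 * \<Lambda>) \<le> (1/2) / (18 * real k * \<Lambda>)"
    proof -
      have "real k * \<bar>t\<bar> \<le> 1/2" by (rule ktle)
      thus ?thesis using Lam0 k1 t0 by (simp add: field_simps)
    qed
    ultimately have "\<bar>t\<bar> / (18 * \<Lambda>) \<le> Dp" using Dlow by linarith
    thus ?thesis unfolding \<Lambda>_def by (simp add: field_simps)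
  qed
  finally show ?thesis unfolding z_def .
qed



theorem lemma7:
  shows "\<exists>c4 c5 C6 :: real. c4 > 0 \<and> c5 > 0 \<and> C6 > 0 \<and>
    (\<exists>a0 > 0. \<forall>a. 0 < a \<and> a < a0 \<longrightarrow> (\<forall>rs. rstar_ok a rs \<longrightarrow>
      (\<forall>t::real. \<bar>t\<bar> \<le> c4 * a \<longrightarrow> hh a rs (cis (2 * pi * t)) \<in> GG a) \<and>
      (\<forall>t::real. \<bar>t\<bar> \<le> 1/2 \<and> \<bar>t\<bar> > C6 * a powr (1/2) \<longrightarrow>
         cmod (hh a rs (cis (2 * pi * t))) \<le> 1 - c5 * \<bar>t\<bar> / (ln (1 / a))\<^sup>2)))"
proof -
  obtain R :: real where R16: "R \<ge> 16" and RR: "\<And>r rs. real r \<ge> R \<Longrightarrow> rs \<le> r \<Longrightarrow>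
     (\<Sum>j=rs+1..r. 1 / (ln (real j + 3))\<^sup>2) \<le> (\<Sum>j=1..rs. 1 / (ln (real j + 3))\<^sup>2) \<Longrightarrow> real r \<le> 16 * real rs"
    using rs_large by blast
  define K where "K = R + 2000"
  have K0: "0 < K" unfolding K_def using R16 by simp
  define a0 where "a0 = 1 / K^2"
  have a00: "a0 > 0" unfolding a0_def using K0 by simp
  have key: "K \<le> 1 / sqrt a" if a: "0 < a" "a < a0" for a
  proof -
    have "sqrt a < sqrt a0" using a by simp
    also have "sqrt a0 = 1 / K" unfolding a0_def using K0 by (simp add: real_sqrt_divide)
    finally have "sqrt a < 1 / K" .
    hence "sqrt a * K < 1" using K0 by (simp add: field_simps)
    thus ?thesis using a K0 by (simp add: field_simps)
  qed
  show ?thesis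
  proof (rule exI[of _ "1/100"], rule exI[of _ "1/36"], rule exI[of _ "1152"], intro conjI)
    show "(0::real) < 1/100" "(0::real) < 1/36" "(0::real) < 1152" by simp_all
    show "\<exists>a0>0. \<forall>a. 0 < a \<and> a < a0 \<longrightarrow> (\<forall>rs. rstar_ok a rs \<longrightarrow>
      (\<forall>t::real. \<bar>t\<bar> \<le> 1/100 * a \<longrightarrow> hh a rs (cis (2 * pi * t)) \<in> GG a) \<and>
      (\<forall>t::real. \<bar>t\<bar> \<le> 1/2 \<and> \<bar>t\<bar> > 1152 * a powr (1/2) \<longrightarrow>
         cmod (hh a rs (cis (2 * pi * t))) \<le> 1 - 1/36 * \<bar>t\<bar> / (ln (1 / a))\<^sup>2))"
    proof (rule exI[of _ a0], rule conjI[OF a00], intro allI impI)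
      fix a rs
      assume a: "0 < a \<and> a < a0" and rs: "rstar_ok a rs"
      have Ka: "K \<le> 1 / sqrt a" using key a by auto
      have a2000: "2000 \<le> 1 / sqrt a" using Ka R16 unfolding K_def by linarith
      have "R \<le> real (rr a)" using rr_bounds(2)[of a] a Ka unfolding K_def by linarith
      moreover have "rs \<le> rr a" using rs unfolding rstar_ok_def by simp
      moreover have "(\<Sum>j=rs+1..rr a. 1 / (ln (real j + 3))\<^sup>2) \<le> (\<Sum>j=1..rs. 1 / (ln (real j + 3))\<^sup>2)"
        using rs unfolding rstar_ok_def Let_def by linarith
      ultimately have r16: "real (rr a) \<le> 16 * real rs" by (rule RR)
      have G1: "\<forall>t::real. \<bar>t\<bar> \<le> 1/100 * a \<longrightarrow> hh a rs (cis (2 * pi * t)) \<in> GG a"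
        using part1[of a rs] a a2000 rs r16 by auto
      have G2: "\<forall>t::real. \<bar>t\<bar> \<le> 1/2 \<and> \<bar>t\<bar> > 1152 * a powr (1/2) \<longrightarrow>
         cmod (hh a rs (cis (2 * pi * t))) \<le> 1 - 1/36 * \<bar>t\<bar> / (ln (1 / a))\<^sup>2"
        using part2[of a rs] a a2000 rs r16 by auto
      show "(\<forall>t::real. \<bar>t\<bar> \<le> 1/100 * a \<longrightarrow> hh a rs (cis (2 * pi * t)) \<in> GG a) \<and>
        (\<forall>t::real. \<bar>t\<bar> \<le> 1/2 \<and> \<bar>t\<bar> > 1152 * a powr (1/2) \<longrightarrow>
         cmod (hh a rs (cis (2 * pi * t))) \<le> 1 - 1/36 * \<bar>t\<bar> / (ln (1 / a))\<^sup>2)"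
        using G1 G2 by blast
    qed
  qed
qed


end
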